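(* Let $\mathscr M$ be a module over $\mathbb Z[\mathbb L]_{\mathrm{loc}}=\mathbb Z[\mathbb L,\mathbb L^{-1},(1-\mathbb L^n)^{-1},n\ge1]$ and let $\mathbf T$, $\mathbf U$ be disjoint tuples of variables. Then $$\mathscr M[[\mathbf T]]_{\mathrm{int}}[[\mathbf U]]_{\mathrm{int}}\subset\mathscr M[[\mathbf T,\mathbf U]]_{\mathrm{int}}\subset\mathscr M[[\mathbf T]]_{\mathrm{int}}[[\mathbf U]],$$ where $\mathscr M[[\mathbf T]]_{\mathrm{int}}[[\mathbf U]]$ is the set of formal power series in $\mathbf U$ with coefficients in $\mathscr M[[\mathbf T]]_{\mathrm{int}}$, and $\mathscr M[[\mathbf T]]_{\mathrm{int}}[[\mathbf U]]_{\mathrm{int}}$ is the set of integrable series in $\mathbf U$ over the module $\mathscr M[[\mathbf T]]_{\mathrm{int}}$.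
   Context: For a module $\mathscr M$ over $\mathbb Z[\mathbb L,\mathbb L^{-1}]$ and variables $\mathbf T=(T_1,\dots,T_r)$, $\mathscr M[[\mathbf T]]_{\mathrm{int}}=\mathscr M[\mathbf T][(1-\mathbb L^m\mathbf T^{\mathbf n})^{-1}]_{m\in\mathbb Z_{<0},\,\mathbf n\in\mathbb N^r\setminus\{0\}}$, regarded as a submodule of $\mathscr M[[\mathbf T]]$ via geometric series expansion. *)

theory Defs
  imports Complex_Main "HOL-Library.Function_Algebras"
begin

text \<open>Formal power series in a tuple of variables indexed by a finite type 'v:
  a series with coefficients in 'm is a function from exponent vectors
  ('v \<Rightarrow> nat) to 'm.\<close>

type_synonym ('v, 'm) fseries = "('v \<Rightarrow> nat) \<Rightarrow> 'm"

definition Lpow :: "'r::comm_ring_1 \<Rightarrow> 'r \<Rightarrow> int \<Rightarrow> 'r" where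
  "Lpow L Linv z = (if 0 \<le> z then L ^ nat z else Linv ^ nat (- z))"

definition is_poly :: "('v, 'm::zero) fseries \<Rightarrow> bool" where
  "is_poly f \<longleftrightarrow> finite {n. f n \<noteq> 0}"

definition one_series :: "('v, 'r::{zero,one}) fseries" where
  "one_series n = (if n = (\<lambda>_. 0) then 1 else 0)"

text \<open>Geometric series expansion of (1 - L^m T^v)^{-1} = sum_k L^(m k) T^(k v).\<close>
definition geom :: "'r::comm_ring_1 \<Rightarrow> 'r \<Rightarrow> int \<Rightarrow> ('v \<Rightarrow> nat) \<Rightarrow> ('v, 'r) fseries" where
  "geom L Linv m v w =
     (if \<exists>k. w = (\<lambda>i. k * v i)
      then Lpow L Linv (m * int (THE k. w = (\<lambda>i. k * v i))) else 0)"

definition rmul :: "('v, 'r::comm_ring_1) fseries \<Rightarrow> ('v, 'r) fseries \<Rightarrow> ('v, 'r) fseries" where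
  "rmul A B c = (\<Sum>p\<in>{(a, b). \<forall>i. a i + b i = c i}. A (fst p) * B (snd p))"

definition smul :: "('r \<Rightarrow> 'm \<Rightarrow> 'm) \<Rightarrow> ('v, 'r) fseries \<Rightarrow> ('v, 'm::comm_monoid_add) fseries
    \<Rightarrow> ('v, 'm) fseries" where
  "smul scale A F c = (\<Sum>p\<in>{(a, b). \<forall>i. a i + b i = c i}. scale (A (fst p)) (F (snd p)))"

text \<open>Integrable series over a submodule N of a module 'm (scalar action scale):
  the image of N[T][(1 - L^m T^n)^{-1}] (m < 0, n \<noteq> 0) in N[[T]] via geometric
  series expansion, i.e. series of the form (prod_i (1 - L^m_i T^n_i)^{-1}) * f with f a
  polynomial with coefficients in N.\<close>
definition int_series ::
  "('r::comm_ring_1 \<Rightarrow> 'm::comm_monoid_add \<Rightarrow> 'm) \<Rightarrow> 'r \<Rightarrow> 'r \<Rightarrow> 'm set \<Rightarrow> ('v, 'm) fseries set" where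
  "int_series scale L Linv N =
     {F. \<exists>ps f. (\<forall>(m, v) \<in> set ps. m < 0 \<and> v \<noteq> (\<lambda>_. 0)) \<and> is_poly f \<and> (\<forall>n. f n \<in> N) \<and>
          F = smul scale (foldr (\<lambda>(m, v) acc. rmul (geom L Linv m v) acc) ps one_series) f}"

definition series_scale :: "('r \<Rightarrow> 'm \<Rightarrow> 'm) \<Rightarrow> 'r \<Rightarrow> ('v, 'm) fseries \<Rightarrow> ('v, 'm) fseries" where
  "series_scale scale r F = (\<lambda>n. scale r (F n))"

text \<open>Identification of series in (T,U) (variables indexed by 'a + 'b) with series in U
  whose coefficients are series in T.\<close>
definition flatten :: "('b, ('a, 'm) fseries) fseries \<Rightarrow> ('a + 'b, 'm) fseries" where
  "flatten G e = G (e \<circ> Inr) (e \<circ> Inl)"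

definition unflatten :: "('a + 'b, 'm) fseries \<Rightarrow> ('b, ('a, 'm) fseries) fseries" where
  "unflatten F u t = F (case_sum t u)"

end

theory Submission
  imports Defs "HOL-Library.FuncSet"
begin

abbreviation AD :: "('v \<Rightarrow> nat) \<Rightarrow> (('v \<Rightarrow> nat) \<times> ('v \<Rightarrow> nat)) set" where
  "AD c \<equiv> {(a, b). \<forall>i. a i + b i = c i}"

lemma sum_apply_fun: "(sum f A) x = (\<Sum>a\<in>A. f a x)"
  by (induct A rule: infinite_finite_induct) auto

lemma finite_le_fun: "finite {a :: 'v::finite \<Rightarrow> nat. a \<le> c}"
proof -
  have "{a :: 'v \<Rightarrow> nat. a \<le> c} \<subseteq> (\<Pi>\<^sub>E i \<in> UNIV. {..c i})"
    by (auto simp: le_fun_def PiE_iff)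
  moreover have "finite (\<Pi>\<^sub>E i \<in> (UNIV::'v set). {..c i})"
    by (rule finite_PiE) auto
  ultimately show ?thesis by (rule finite_subset)
qed

lemma AD_sub: "AD c \<subseteq> {a. a \<le> c} \<times> {a. a \<le> c}"
proof (rule subrelI)
    fix a b assume "(a,b) \<in> AD c"
    hence h: "\<And>i. a i + b i = c i" by auto
    have "a i \<le> c i" "b i \<le> c i" for i using h[of i] by linarith+
    thus "(a,b) \<in> {a. a \<le> c} \<times> {a. a \<le> c}" by (simp add: le_fun_def)
qed

lemma finite_AD: "finite (AD (c :: 'v::finite \<Rightarrow> nat))"
  using AD_sub[of c] finite_le_fun[of c] by (meson finite_SigmaI finite_subset)

lemma module_mult: "module ((*) :: 'r::comm_ring_1 \<Rightarrow> 'r \<Rightarrow> 'r)"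
  by standard (simp_all add: algebra_simps)

lemma rmul_smul: "rmul = smul (*)"
  unfolding rmul_def smul_def by (rule refl)

lemma AD_swap: "(\<Sum>p\<in>AD c. h p) = (\<Sum>p\<in>AD c. h (snd p, fst p))"
  by (rule sum.reindex_bij_witness[where i="\<lambda>p. (snd p, fst p)" and j="\<lambda>p. (snd p, fst p)"])
     (auto simp: add.commute)

lemma rmul_comm: "rmul A B = rmul B (A :: ('v, 'r::comm_ring_1) fseries)"
  unfolding rmul_def fun_eq_iff
  by (subst AD_swap) (simp add: mult.commute)

lemma AD_triple:
  fixes h :: "('v::finite \<Rightarrow> nat) \<Rightarrow> ('v \<Rightarrow> nat) \<Rightarrow> ('v \<Rightarrow> nat) \<Rightarrow> 'm::comm_monoid_add"
  shows "(\<Sum>p\<in>AD c. \<Sum>q\<in>AD (fst p). h (fst q) (snd q) (snd p))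
       = (\<Sum>p\<in>AD c. \<Sum>q\<in>AD (snd p). h (fst p) (fst q) (snd q))"
proof -
  have "(\<Sum>p\<in>AD c. \<Sum>q\<in>AD (fst p). h (fst q) (snd q) (snd p))
      = (\<Sum>x\<in>Sigma (AD c) (\<lambda>p. AD (fst p)). h (fst (snd x)) (snd (snd x)) (snd (fst x)))"
    by (subst sum.Sigma) (simp_all add: finite_AD prod.case_eq_if)
  also have "\<dots> = (\<Sum>x\<in>Sigma (AD c) (\<lambda>p. AD (snd p)). h (fst (fst x)) (fst (snd x)) (snd (snd x)))"
    apply (rule sum.reindex_bij_witness[where
          i="\<lambda>x. ((fst (fst x) + fst (snd x), snd (snd x)),(fst (fst x), fst (snd x)))" 
      and j="\<lambda>x. ((fst (snd x), snd (snd x) + snd (fst x)),(snd (snd x), snd (fst x)))"])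
    apply (auto simp: add.assoc[symmetric] fun_eq_iff)
    by (metis add.assoc)
  also have "\<dots> = (\<Sum>p\<in>AD c. \<Sum>q\<in>AD (snd p). h (fst p) (fst q) (snd q))"
    by (subst sum.Sigma) (simp_all add: finite_AD prod.case_eq_if)
  finally show ?thesis .
qed


lemma smul_assoc:
  fixes A B :: "('v::finite, 'r::comm_ring_1) fseries"
  assumes "module scale"
  shows "smul scale (rmul A B) F = smul scale A (smul scale B F)"
proof -
  interpret module scale by fact
  show ?thesis
  proof
    fix c
    have "smul scale (rmul A B) F c = (\<Sum>p\<in>AD c. \<Sum>q\<in>AD (fst p).
             scale (A (fst q)) (scale (B (snd q)) (F (snd p))))"
      unfolding smul_def rmul_def by (simp add: scale_sum_left)
    also have "\<dots> = (\<Sum>p\<in>AD c. \<Sum>q\<in>AD (snd p).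
             scale (A (fst p)) (scale (B (fst q)) (F (snd q))))"
      by (rule AD_triple)
    also have "\<dots> = smul scale A (smul scale B F) c"
      unfolding smul_def by (simp add: scale_sum_right)
    finally show "smul scale (rmul A B) F c = smul scale A (smul scale B F) c" .
  qed
qed

lemma rmul_assoc:
  fixes A B C :: "('v::finite, 'r::comm_ring_1) fseries"
  shows "rmul (rmul A B) C = rmul A (rmul B C)"
  using smul_assoc[OF module_mult, of A B C] by (simp add: rmul_smul)

lemma AD_delta:
  fixes c w :: "'v::finite \<Rightarrow> nat"
  shows "(\<Sum>p\<in>AD c. if fst p = w then h (snd p) else (0::'m::comm_monoid_add))
         = (if w \<le> c then h (c - w) else 0)"
proof (cases "w \<le> c")
  case True
  have mem: "(w, c - w) \<in> AD c" using True by (auto simp: le_fun_def)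
  have "(\<Sum>p\<in>AD c. if fst p = w then h (snd p) else 0)
      = (\<Sum>p\<in>AD c. if p = (w, c - w) then h (c - w) else 0)"
  proof (rule sum.cong[OF refl])
    fix p assume "p \<in> AD c"
    then obtain a b where p: "p = (a,b)" and hh: "\<And>i. a i + b i = c i" by auto
    show "(if fst p = w then h (snd p) else 0) = (if p = (w, c - w) then h (c - w) else 0)"
    proof (cases "a = w")
      case True
      hence "b = c - w" using hh by (auto simp: fun_eq_iff) (metis add_diff_cancel_left')
      thus ?thesis using True p by simp
    qed (use p in auto)
  qed
  also have "\<dots> = h (c - w)" by (simp only: sum.delta[OF finite_AD] if_True mem)
  finally show ?thesis using True by simp
next
  case False
  have "\<And>p. p \<in> AD c \<Longrightarrow> fst p \<noteq> w"
  proof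
    fix p assume "p \<in> AD c" "fst p = w"
    then obtain b where "\<And>i. w i + b i = c i" by (cases p) auto
    hence "w \<le> c" by (auto simp: le_fun_def) (metis le_add1)
    thus False using False by simp
  qed
  thus ?thesis using False by (simp add: sum.neutral)
qed

definition mono_s :: "('v \<Rightarrow> nat) \<Rightarrow> ('v, 'r::{zero,one}) fseries" where
  "mono_s w e = (if e = w then 1 else 0)"

lemma smul_mono:
  fixes w :: "'v::finite \<Rightarrow> nat"
  assumes "module scale"
  shows "smul scale (mono_s w) F c = (if w \<le> c then F (c - w) else 0)"
proof -
  interpret module scale by fact
  have "smul scale (mono_s w) F c = (\<Sum>p\<in>AD c. if fst p = w then F (snd p) else 0)"
    unfolding smul_def mono_s_def by (rule sum.cong) auto
  thus ?thesis by (simp add: AD_delta)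
qed

lemma one_series_mono: "one_series = mono_s (\<lambda>_. 0)"
  by (simp add: one_series_def mono_s_def fun_eq_iff)

lemma smul_one:
  fixes F :: "('v::finite, 'm::ab_group_add) fseries"
  assumes "module scale"
  shows "smul scale one_series F = F"
proof
  fix c :: "'v \<Rightarrow> nat"
  have "c - (\<lambda>_. 0) = c" by (simp add: fun_eq_iff)
  moreover have "smul scale one_series F c = F (c - (\<lambda>_. 0))"
    using smul_mono[OF assms, of "\<lambda>_. 0" F c] by (simp add: one_series_mono le_fun_def)
  ultimately show "smul scale one_series F c = F c" by simp
qed

lemma rmul_one: "rmul one_series A = (A :: ('v::finite, 'r::comm_ring_1) fseries)"
  using smul_one[OF module_mult] by (simp add: rmul_smul)

lemma rmul_one_right: "rmul A one_series = (A :: ('v::finite, 'r::comm_ring_1) fseries)"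
  by (metis rmul_comm rmul_one)

lemma smul_add:
  assumes "module scale"
  shows "smul scale A (F + G) = smul scale A F + smul scale A G"
proof -
  interpret module scale by fact
  show ?thesis unfolding smul_def by (simp add: fun_eq_iff scale_right_distrib sum.distrib)
qed

lemma smul_zero:
  assumes "module scale"
  shows "smul scale A 0 = 0"
proof -
  interpret module scale by fact
  show ?thesis unfolding smul_def by (simp add: fun_eq_iff)
qed

lemma smul_sum:
  assumes "module scale"
  shows "smul scale A (sum F S) = (\<Sum>x\<in>S. smul scale A (F x))"
proof (induct S rule: infinite_finite_induct)
  case (infinite S) thus ?case by (simp only: sum.infinite[OF infinite] smul_zero[OF assms])
next
  case empty thus ?case by (simp only: sum.empty smul_zero[OF assms])
next
  case (insert x S) thus ?case by (simp only: sum.insert[OF insert(1,2)] smul_add[OF assms])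
qed


definition Dl :: "'r::comm_ring_1 \<Rightarrow> 'r \<Rightarrow> (int \<times> ('v \<Rightarrow> nat)) list \<Rightarrow> ('v, 'r) fseries" where
  "Dl L Linv ps = foldr (\<lambda>(m, v) acc. rmul (geom L Linv m v) acc) ps one_series"

definition lin :: "'r::comm_ring_1 \<Rightarrow> 'r \<Rightarrow> int \<Rightarrow> ('v \<Rightarrow> nat) \<Rightarrow> ('v, 'r) fseries" where
  "lin L Linv m v e = (if e = (\<lambda>_. 0) then 1 else 0) - (if e = v then Lpow L Linv m else 0)"

definition Pl :: "'r::comm_ring_1 \<Rightarrow> 'r \<Rightarrow> (int \<times> ('v \<Rightarrow> nat)) list \<Rightarrow> ('v, 'r) fseries" where
  "Pl L Linv ps = foldr (\<lambda>(m, v) acc. rmul (lin L Linv m v) acc) ps one_series"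

definition good :: "(int \<times> ('v \<Rightarrow> nat)) list \<Rightarrow> bool" where
  "good ps \<longleftrightarrow> (\<forall>(m, v) \<in> set ps. m < 0 \<and> v \<noteq> (\<lambda>_. 0))"

lemma Dl_Cons: "Dl L Linv ((m,v) # ps) = rmul (geom L Linv m v) (Dl L Linv ps)"
  by (simp add: Dl_def)
lemma Dl_Nil: "Dl L Linv [] = one_series"
  by (simp add: Dl_def)
lemma Pl_Cons: "Pl L Linv ((m,v) # ps) = rmul (lin L Linv m v) (Pl L Linv ps)"
  by (simp add: Pl_def)
lemma Pl_Nil: "Pl L Linv [] = one_series"
  by (simp add: Pl_def)
lemma good_Cons: "good ((m,v) # ps) \<longleftrightarrow> m < 0 \<and> v \<noteq> (\<lambda>_. 0) \<and> good ps"
  by (simp add: good_def)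
lemma good_append: "good (ps @ qs) \<longleftrightarrow> good ps \<and> good qs"
  by (auto simp: good_def)

lemma mult_vec_inj:
  assumes "v \<noteq> (\<lambda>_. 0::nat)" "(\<lambda>i. k * v i) = (\<lambda>i. k' * v i)"
  shows "k = k'"
proof -
  obtain i where "v i \<noteq> 0" using assms(1) by auto
  moreover have "k * v i = k' * v i" using assms(2) by (metis)
  ultimately show ?thesis by simp
qed

lemma Lpow_neg:
  assumes "m < 0"
  shows "Lpow L Linv (m * int k) = Linv ^ (nat (- m) * k)"
proof (cases "k = 0")
  case True thus ?thesis by (simp add: Lpow_def)
next
  case False
  hence "\<not> 0 \<le> m * int k" using assms by (simp add: mult_less_0_iff not_le)
  moreover have "nat (- (m * int k)) = nat ((- m) * int k)" by simp
  moreover have "nat ((- m) * int k) = nat (- m) * nat (int k)"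
    by (rule nat_mult_distrib) (use assms in simp)
  ultimately show ?thesis by (simp add: Lpow_def)
qed

lemma geom_mult:
  assumes "m < 0" "v \<noteq> (\<lambda>_. 0)"
  shows "geom L Linv m v (\<lambda>i. k * v i) = Linv ^ (nat (- m) * k)"
proof -
  have "(THE k'. (\<lambda>i. k * v i) = (\<lambda>i. k' * v i)) = k"
    using mult_vec_inj[OF assms(2)] by (rule_tac the_equality) auto
  thus ?thesis using Lpow_neg[OF assms(1)] by (auto simp: geom_def)
qed

lemma geom_not_mult:
  assumes "\<not> (\<exists>k. w = (\<lambda>i. k * v i))"
  shows "geom L Linv m v w = 0"
  using assms by (simp add: geom_def)

lemma rmul_lin_geom:
  fixes v :: "'v::finite \<Rightarrow> nat" and L Linv :: "'r::comm_ring_1"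
  assumes m: "m < 0" and v: "v \<noteq> (\<lambda>_. 0)"
  shows "rmul (lin L Linv m v) (geom L Linv m v) = one_series"
proof
  fix c
  let ?G = "geom L Linv m v"
  let ?n = "nat (- m)"
  have Lm: "Lpow L Linv m = Linv ^ ?n" using Lpow_neg[OF m, where k=1] by simp
  have "rmul (lin L Linv m v) ?G c
     = (\<Sum>p\<in>AD c. (if fst p = (\<lambda>_. 0) then ?G (snd p) else 0)
                  - (if fst p = v then Lpow L Linv m * ?G (snd p) else 0))"
    unfolding rmul_def lin_def by (rule sum.cong) (auto simp: algebra_simps)
  also have "\<dots> = ?G c - (if v \<le> c then Lpow L Linv m * ?G (c - v) else 0)"
  proof -
    have z1: "(\<lambda>_. 0) \<le> c" by (simp add: le_fun_def)
    have z2: "c - (\<lambda>_. 0) = c" by (simp add: fun_eq_iff)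
    show ?thesis
      unfolding sum_subtractf AD_delta[where c=c and w="\<lambda>_. 0" and h="?G"]
        AD_delta[where c=c and w=v and h="\<lambda>b. Lpow L Linv m * ?G b"]
      using z1 z2 by simp
  qed
  also have "\<dots> = one_series c"
  proof (cases "\<exists>k. c = (\<lambda>i. k * v i)")
    case True
    then obtain k where k: "c = (\<lambda>i. k * v i)" by auto
    show ?thesis
    proof (cases k)
      case 0
      hence c0: "c = (\<lambda>_. 0)" using k by simp
      have "\<not> v \<le> c" using v c0 by (auto simp: le_fun_def fun_eq_iff)
      thus ?thesis using geom_mult[OF m v, of L Linv 0] c0 by (simp add: one_series_def)
    next
      case (Suc j)
      have vc: "v \<le> c" using k Suc by (auto simp: le_fun_def)
      have cv: "c - v = (\<lambda>i. j * v i)" using k Suc by (auto simp: fun_eq_iff)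
      have c0: "c \<noteq> (\<lambda>_. 0)" using k Suc v by (auto simp: fun_eq_iff)
      have "?G c = Linv ^ ?n * Linv ^ (?n * j)"
        using geom_mult[OF m v, of L Linv k] k Suc by (simp add: power_add[symmetric])
      thus ?thesis using vc cv c0 geom_mult[OF m v, of L Linv j] Lm by (simp add: one_series_def)
    qed
  next
    case False
    have c0: "c \<noteq> (\<lambda>_. 0)" using False by (metis mult_0)
    have "\<not> (\<exists>k. c - v = (\<lambda>i. k * v i))" if "v \<le> c"
    proof
      assume "\<exists>k. c - v = (\<lambda>i. k * v i)"
      then obtain k where "c - v = (\<lambda>i. k * v i)" by auto
      hence "c = (\<lambda>i. Suc k * v i)" using that
        by (auto simp: fun_eq_iff le_fun_def) (metis add.commute le_add_diff_inverse)
      thus False using False by blast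
    qed
    thus ?thesis using False c0 by (simp add: geom_not_mult one_series_def)
  qed
  finally show "rmul (lin L Linv m v) ?G c = one_series c" .
qed

lemma rmul_left_comm:
  fixes A B C :: "('v::finite, 'r::comm_ring_1) fseries"
  shows "rmul A (rmul B C) = rmul B (rmul A C)"
  by (metis rmul_assoc rmul_comm)

lemma Dl_Pl:
  fixes ps :: "(int \<times> ('v::finite \<Rightarrow> nat)) list"
  assumes "good ps"
  shows "rmul (Pl L Linv ps) (Dl L Linv ps) = one_series"
  using assms
proof (induct ps)
  case Nil thus ?case by (simp add: Dl_Nil Pl_Nil rmul_one)
next
  case (Cons x ps)
  obtain m v where x: "x = (m,v)" by (cases x)
  have g: "m < 0" "v \<noteq> (\<lambda>_. 0)" "good ps" using Cons.prems x by (auto simp: good_Cons)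
  have "rmul (Pl L Linv (x # ps)) (Dl L Linv (x # ps))
      = rmul (rmul (lin L Linv m v) (geom L Linv m v)) (rmul (Pl L Linv ps) (Dl L Linv ps))"
    by (simp add: x Dl_Cons Pl_Cons rmul_assoc rmul_left_comm)
  also have "\<dots> = one_series" using Cons.hyps[OF g(3)] rmul_lin_geom[OF g(1,2)]
    by (simp add: rmul_one rmul_one_right)
  finally show ?case .
qed

lemma Dl_append:
  fixes ps :: "(int \<times> ('v::finite \<Rightarrow> nat)) list"
  shows "Dl L Linv (ps @ qs) = rmul (Dl L Linv ps) (Dl L Linv qs)"
proof (induct ps)
  case Nil thus ?case by (simp add: Dl_Nil rmul_one)
next
  case (Cons x ps)
  obtain m v where x: "x = (m,v)" by (cases x)
  show ?case using Cons by (simp add: x Dl_Cons rmul_assoc)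
qed

lemma Pl_append:
  fixes ps :: "(int \<times> ('v::finite \<Rightarrow> nat)) list"
  shows "Pl L Linv (ps @ qs) = rmul (Pl L Linv ps) (Pl L Linv qs)"
proof (induct ps)
  case Nil thus ?case by (simp add: Pl_Nil rmul_one)
next
  case (Cons x ps)
  obtain m v where x: "x = (m,v)" by (cases x)
  show ?case using Cons by (simp add: x Pl_Cons rmul_assoc)
qed

lemma smul_poly:
  fixes A :: "('v::finite, 'r::comm_ring_1) fseries" and F :: "('v, 'm::comm_monoid_add) fseries"
  assumes z1: "\<And>x. scale 0 x = 0" and z2: "\<And>r. scale r 0 = 0"
    and pA: "is_poly A" and pF: "is_poly F"
  shows "is_poly (smul scale A F)"
proof -
  have "{c. smul scale A F c \<noteq> 0} \<subseteq> (\<lambda>p. fst p + snd p) ` ({a. A a \<noteq> 0} \<times> {b. F b \<noteq> 0})"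
  proof
    fix c assume "c \<in> {c. smul scale A F c \<noteq> 0}"
    hence ne: "(\<Sum>p\<in>AD c. scale (A (fst p)) (F (snd p))) \<noteq> 0" by (simp add: smul_def)
    obtain p where p: "p \<in> AD c" and nz: "scale (A (fst p)) (F (snd p)) \<noteq> 0"
      using sum.not_neutral_contains_not_neutral[OF ne] by blast
    have "A (fst p) \<noteq> 0" using nz z1 by auto
    moreover have "F (snd p) \<noteq> 0" using nz z2 by auto
    moreover have "c = fst p + snd p" using p by (cases p) (simp add: fun_eq_iff)
    ultimately show "c \<in> (\<lambda>p. fst p + snd p) ` ({a. A a \<noteq> 0} \<times> {b. F b \<noteq> 0})" 
      by (intro image_eqI[where x=p]) (auto simp: mem_Times_iff)
  qed
  moreover have "finite ((\<lambda>p. fst p + snd p) ` ({a. A a \<noteq> 0} \<times> {b. F b \<noteq> 0}))"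
    using pA pF unfolding is_poly_def by (intro finite_imageI finite_cartesian_product)
  ultimately show ?thesis unfolding is_poly_def by (rule finite_subset)
qed
lemma rmul_poly:
  fixes A B :: "('v::finite, 'r::comm_ring_1) fseries"
  shows "is_poly A \<Longrightarrow> is_poly B \<Longrightarrow> is_poly (rmul A B)"
  unfolding rmul_smul by (rule smul_poly) auto

lemma poly_one: "is_poly one_series"
proof -
  have "{n. one_series n \<noteq> (0::'r::{zero,one})} \<subseteq> {\<lambda>_. 0}" by (auto simp: one_series_def)
  thus ?thesis unfolding is_poly_def by (rule finite_subset) simp
qed

lemma poly_mono: "is_poly (mono_s w)"
proof -
  have "{n. mono_s w n \<noteq> (0::'r::{zero,one})} \<subseteq> {w}" by (auto simp: mono_s_def)
  thus ?thesis unfolding is_poly_def by (rule finite_subset) simp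
qed

lemma poly_lin: "is_poly (lin L Linv m v)"
proof -
  have "{n. lin L Linv m v n \<noteq> 0} \<subseteq> {\<lambda>_. 0, v}" by (auto simp: lin_def)
  thus ?thesis unfolding is_poly_def by (rule finite_subset) simp
qed

lemma poly_Pl:
  fixes ps :: "(int \<times> ('v::finite \<Rightarrow> nat)) list"
  shows "is_poly (Pl L Linv ps)"
proof (induct ps)
  case Nil thus ?case by (simp add: Pl_Nil poly_one)
next
  case (Cons x ps)
  obtain m v where x: "x = (m,v)" by (cases x)
  show ?case using Cons by (simp add: x Pl_Cons rmul_poly poly_lin)
qed

lemma poly_add: "is_poly (F :: ('v, 'm::monoid_add) fseries) \<Longrightarrow> is_poly G \<Longrightarrow> is_poly (F + G)"
proof -
  assume "is_poly F" "is_poly G"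
  moreover have "{n. (F + G) n \<noteq> 0} \<subseteq> {n. F n \<noteq> 0} \<union> {n. G n \<noteq> 0}" by auto
  ultimately show ?thesis unfolding is_poly_def by (meson finite_Un finite_subset)
qed

lemma poly_zero: "is_poly 0"
  by (simp add: is_poly_def)

lemma IS_iff:
  "F \<in> int_series scale L Linv UNIV \<longleftrightarrow>
     (\<exists>ps f. good ps \<and> is_poly f \<and> F = smul scale (Dl L Linv ps) f)"
  unfolding int_series_def good_def Dl_def by auto

lemma IS_zero:
  fixes L Linv :: "'r::comm_ring_1"
  assumes "module scale"
  shows "(0 :: ('v::finite, 'm::ab_group_add) fseries) \<in> int_series scale L Linv UNIV"
  unfolding IS_iff
  by (rule exI[of _ "[]"], rule exI[of _ 0])
     (simp add: good_def poly_zero Dl_Nil smul_one[OF assms])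

lemma IS_add:
  fixes L Linv :: "'r::comm_ring_1" and F G :: "('v::finite, 'm::ab_group_add) fseries"
  assumes mod: "module scale"
    and F: "F \<in> int_series scale L Linv UNIV" and G: "G \<in> int_series scale L Linv UNIV"
  shows "F + G \<in> int_series scale L Linv UNIV"
proof -
  interpret module scale by fact
  obtain ps f where ps: "good ps" "is_poly f" "F = smul scale (Dl L Linv ps) f"
    using F unfolding IS_iff by auto
  obtain qs g where qs: "good qs" "is_poly g" "G = smul scale (Dl L Linv qs) g"
    using G unfolding IS_iff by auto
  let ?D = "Dl L Linv" and ?P = "Pl L Linv"
  have e1: "rmul (rmul (?D ps) (?D qs)) (?P qs) = ?D ps"
    unfolding rmul_assoc by (subst rmul_comm[of "?D qs"]) (simp add: Dl_Pl[OF qs(1)] rmul_one_right)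
  have e2: "rmul (rmul (?D ps) (?D qs)) (?P ps) = ?D qs"
    by (subst rmul_comm[of "?D ps"]) (simp only: rmul_assoc, subst rmul_comm[of "?D ps"], simp add: Dl_Pl[OF ps(1)] rmul_one_right)
  have "F + G = smul scale (?D (ps @ qs)) (smul scale (?P qs) f + smul scale (?P ps) g)"
    by (simp only: smul_add[OF mod] Dl_append smul_assoc[OF mod, symmetric] e1 e2 ps(3) qs(3))
  moreover have "is_poly (smul scale (?P qs) f + smul scale (?P ps) g)"
    by (intro poly_add smul_poly poly_Pl ps(2) qs(2)) simp_all
  moreover have "good (ps @ qs)" using ps(1) qs(1) by (simp add: good_append)
  ultimately show ?thesis unfolding IS_iff by blast
qed

lemma IS_sum:
  fixes L Linv :: "'r::comm_ring_1" and F :: "'x \<Rightarrow> ('v::finite, 'm::ab_group_add) fseries"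
  assumes mod: "module scale" and "\<And>x. x \<in> S \<Longrightarrow> F x \<in> int_series scale L Linv UNIV"
  shows "sum F S \<in> int_series scale L Linv UNIV"
  using assms(2)
proof (induct S rule: infinite_finite_induct)
  case (infinite S) thus ?case by (simp only: sum.infinite[OF infinite(1)] IS_zero[OF mod])
next
  case empty thus ?case by (simp only: sum.empty IS_zero[OF mod])
next
  case (insert x S)
  show ?case unfolding sum.insert[OF insert(1,2)]
    by (rule IS_add[OF mod]) (use insert in auto)
qed

lemma IS_poly_mul:
  fixes L Linv :: "'r::comm_ring_1" and F :: "('v::finite, 'm::ab_group_add) fseries"
  assumes mod: "module scale" and Q: "is_poly Q" and F: "F \<in> int_series scale L Linv UNIV"
  shows "smul scale Q F \<in> int_series scale L Linv UNIV"
proof -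
  interpret module scale by fact
  obtain ps f where ps: "good ps" "is_poly f" "F = smul scale (Dl L Linv ps) f"
    using F unfolding IS_iff by auto
  have "smul scale Q F = smul scale (Dl L Linv ps) (smul scale Q f)"
    by (simp only: ps(3) smul_assoc[OF mod, symmetric]) (subst rmul_comm, rule refl)
  moreover have "is_poly (smul scale Q f)" by (intro smul_poly Q ps(2)) simp_all
  ultimately show ?thesis unfolding IS_iff using ps(1) by blast
qed

lemma IS_Dl_mul:
  fixes L Linv :: "'r::comm_ring_1" and F :: "('v::finite, 'm::ab_group_add) fseries"
  assumes mod: "module scale" and qs: "good qs" and F: "F \<in> int_series scale L Linv UNIV"
  shows "smul scale (Dl L Linv qs) F \<in> int_series scale L Linv UNIV"
proof -
  obtain ps f where ps: "good ps" "is_poly f" "F = smul scale (Dl L Linv ps) f"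
    using F unfolding IS_iff by auto
  have "smul scale (Dl L Linv qs) F = smul scale (Dl L Linv (qs @ ps)) f"
    by (simp only: ps(3) smul_assoc[OF mod, symmetric] Dl_append)
  moreover have "good (qs @ ps)" using ps(1) qs by (simp add: good_append)
  ultimately show ?thesis unfolding IS_iff using ps(2) by blast
qed

definition liftL :: "('a, 'x::zero) fseries \<Rightarrow> ('a + 'b, 'x) fseries" where
  "liftL A e = (if e \<circ> Inr = (\<lambda>_. 0) then A (e \<circ> Inl) else 0)"

definition liftR :: "('b, 'x::zero) fseries \<Rightarrow> ('a + 'b, 'x) fseries" where
  "liftR A e = (if e \<circ> Inl = (\<lambda>_. 0) then A (e \<circ> Inr) else 0)"

lemma case_sum_eta: "case_sum (f \<circ> Inl) (f \<circ> Inr) = f"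
  by (auto simp: fun_eq_iff split: sum.split)

lemma smul_liftL:
  fixes A :: "('a::finite, 'r::comm_ring_1) fseries"
    and H :: "('a + 'b::finite, 'm::comm_monoid_add) fseries"
  assumes z1: "\<And>x. scale 0 x = 0"
  shows "smul scale (liftL A) H e = smul scale A (\<lambda>t. H (case_sum t (e \<circ> Inr))) (e \<circ> Inl)"
proof -
  define h where "h = (\<lambda>q::('a\<Rightarrow>nat)\<times>('a\<Rightarrow>nat).
     (case_sum (fst q) (\<lambda>_::'b. 0::nat), case_sum (snd q) (e \<circ> Inr)))"
  define g where "g = (\<lambda>p::(('a + 'b) \<Rightarrow> nat) \<times> (('a + 'b) \<Rightarrow> nat). scale (liftL A (fst p)) (H (snd p)))"
  have inj: "inj_on h X" for X
  proof (rule inj_onI)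
    fix q q' assume "h q = h q'"
    hence "case_sum (fst q) (\<lambda>_::'b. 0::nat) \<circ> Inl = case_sum (fst q') (\<lambda>_::'b. 0::nat) \<circ> Inl"
          "case_sum (snd q) (e \<circ> Inr) \<circ> Inl = case_sum (snd q') (e \<circ> Inr) \<circ> Inl"
      by (simp_all add: h_def)
    thus "q = q'" by (simp add: case_sum_o_inj prod_eq_iff)
  qed
  have sub: "h ` AD (e \<circ> Inl) \<subseteq> AD e"
  proof
    fix x assume "x \<in> h ` AD (e \<circ> Inl)"
    then obtain a b where ab: "\<forall>i. a i + b i = e (Inl i)" and x: "x = h (a, b)" by auto
    have "case_sum a (\<lambda>_::'b. 0::nat) j + case_sum b (e \<circ> Inr) j = e j" for j
      using ab by (cases j) auto
    thus "x \<in> AD e" by (simp add: x h_def)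
  qed
  have out: "g p = 0" if p: "p \<in> AD e - h ` AD (e \<circ> Inl)" for p
  proof (cases "fst p \<circ> Inr = (\<lambda>_. 0)")
    case True
    obtain a b where pab: "p = (a, b)" and hab: "\<And>i. a i + b i = e i" using p by auto
    have ar: "a \<circ> Inr = (\<lambda>_. 0)" using True pab by simp
    have br: "b \<circ> Inr = e \<circ> Inr"
    proof
      fix j have "a (Inr j) = 0" using ar by (metis comp_apply)
      thus "(b \<circ> Inr) j = (e \<circ> Inr) j" using hab[of "Inr j"] by simp
    qed
    have "p = h (a \<circ> Inl, b \<circ> Inl)"
      unfolding pab h_def using case_sum_eta[of a] case_sum_eta[of b] ar br by simp
    moreover have "(a \<circ> Inl, b \<circ> Inl) \<in> AD (e \<circ> Inl)" using hab by simp
    ultimately show ?thesis using p by blast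
  next
    case False thus ?thesis by (simp add: g_def liftL_def z1)
  qed
  have "smul scale (liftL A) H e = sum g (AD e)" by (simp add: smul_def g_def)
  also have "\<dots> = sum g (h ` AD (e \<circ> Inl))"
    by (rule sum.mono_neutral_right[OF finite_AD sub]) (use out in auto)
  also have "\<dots> = sum (g \<circ> h) (AD (e \<circ> Inl))" by (rule sum.reindex[OF inj])
  also have "\<dots> = smul scale A (\<lambda>t. H (case_sum t (e \<circ> Inr))) (e \<circ> Inl)"
    unfolding smul_def
    by (rule sum.cong) (simp_all add: g_def h_def liftL_def case_sum_o_inj)
  finally show ?thesis .
qed

lemma smul_liftR:
  fixes A :: "('b::finite, 'r::comm_ring_1) fseries"
    and H :: "('a::finite + 'b, 'm::comm_monoid_add) fseries"
  assumes z1: "\<And>x. scale 0 x = 0"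
  shows "smul scale (liftR A) H e = smul scale A (\<lambda>u. H (case_sum (e \<circ> Inl) u)) (e \<circ> Inr)"
proof -
  define h where "h = (\<lambda>q::('b\<Rightarrow>nat)\<times>('b\<Rightarrow>nat).
     (case_sum (\<lambda>_::'a. 0::nat) (fst q), case_sum (e \<circ> Inl) (snd q)))"
  define g where "g = (\<lambda>p::(('a + 'b) \<Rightarrow> nat) \<times> (('a + 'b) \<Rightarrow> nat). scale (liftR A (fst p)) (H (snd p)))"
  have inj: "inj_on h X" for X
  proof (rule inj_onI)
    fix q q' assume "h q = h q'"
    hence "case_sum (\<lambda>_::'a. 0::nat) (fst q) \<circ> Inr = case_sum (\<lambda>_::'a. 0::nat) (fst q') \<circ> Inr"
          "case_sum (e \<circ> Inl) (snd q) \<circ> Inr = case_sum (e \<circ> Inl) (snd q') \<circ> Inr"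
      by (simp_all add: h_def)
    thus "q = q'" by (simp add: case_sum_o_inj prod_eq_iff)
  qed
  have sub: "h ` AD (e \<circ> Inr) \<subseteq> AD e"
  proof
    fix x assume "x \<in> h ` AD (e \<circ> Inr)"
    then obtain a b where ab: "\<forall>i. a i + b i = e (Inr i)" and x: "x = h (a, b)" by auto
    have "case_sum (\<lambda>_::'a. 0::nat) a j + case_sum (e \<circ> Inl) b j = e j" for j
      using ab by (cases j) auto
    thus "x \<in> AD e" by (simp add: x h_def)
  qed
  have out: "g p = 0" if p: "p \<in> AD e - h ` AD (e \<circ> Inr)" for p
  proof (cases "fst p \<circ> Inl = (\<lambda>_. 0)")
    case True
    obtain a b where pab: "p = (a, b)" and hab: "\<And>i. a i + b i = e i" using p by auto
    have ar: "a \<circ> Inl = (\<lambda>_. 0)" using True pab by simp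
    have br: "b \<circ> Inl = e \<circ> Inl"
    proof
      fix j have "a (Inl j) = 0" using ar by (metis comp_apply)
      thus "(b \<circ> Inl) j = (e \<circ> Inl) j" using hab[of "Inl j"] by simp
    qed
    have "p = h (a \<circ> Inr, b \<circ> Inr)"
      unfolding pab h_def using case_sum_eta[of a] case_sum_eta[of b] ar br by simp
    moreover have "(a \<circ> Inr, b \<circ> Inr) \<in> AD (e \<circ> Inr)" using hab by simp
    ultimately show ?thesis using p by blast
  next
    case False thus ?thesis by (simp add: g_def liftR_def z1)
  qed
  have "smul scale (liftR A) H e = sum g (AD e)" by (simp add: smul_def g_def)
  also have "\<dots> = sum g (h ` AD (e \<circ> Inr))"
    by (rule sum.mono_neutral_right[OF finite_AD sub]) (use out in auto)
  also have "\<dots> = sum (g \<circ> h) (AD (e \<circ> Inr))" by (rule sum.reindex[OF inj])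
  also have "\<dots> = smul scale A (\<lambda>u. H (case_sum (e \<circ> Inl) u)) (e \<circ> Inr)"
    unfolding smul_def
    by (rule sum.cong) (simp_all add: g_def h_def liftR_def case_sum_o_inj)
  finally show ?thesis .
qed

lemma liftL_smul:
  fixes A :: "('a::finite, 'r::comm_ring_1) fseries"
    and f :: "('a, 'm::ab_group_add) fseries"
  assumes mod: "module scale"
  shows "liftL (smul scale A f) = (smul scale (liftL A) (liftL f) :: ('a + 'b::finite, 'm) fseries)"
proof
  interpret module scale by fact
  fix e :: "'a + 'b \<Rightarrow> nat"
  have "smul scale (liftL A) (liftL f :: ('a + 'b, 'm) fseries) e
      = smul scale A (\<lambda>t. liftL f (case_sum t (e \<circ> Inr))) (e \<circ> Inl)"
    by (rule smul_liftL) simp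
  also have "\<dots> = liftL (smul scale A f) e"
  proof (cases "e \<circ> Inr = (\<lambda>_. 0)")
    case True
    have "(\<lambda>t. liftL f (case_sum t (e \<circ> Inr) :: 'a + 'b \<Rightarrow> nat)) = f"
      using True by (simp add: liftL_def case_sum_o_inj fun_eq_iff)
    thus ?thesis using True by (simp add: liftL_def)
  next
    case False
    have "(\<lambda>t. liftL f (case_sum t (e \<circ> Inr) :: 'a + 'b \<Rightarrow> nat)) = 0"
      using False by (simp add: liftL_def case_sum_o_inj zero_fun_def)
    thus ?thesis using False by (simp add: liftL_def smul_zero[OF mod])
  qed
  finally show "liftL (smul scale A f) e = smul scale (liftL A) (liftL f :: ('a + 'b, 'm) fseries) e" ..
qed

lemma liftR_smul:
  fixes A :: "('b::finite, 'r::comm_ring_1) fseries"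
    and f :: "('b, 'm::ab_group_add) fseries"
  assumes mod: "module scale"
  shows "liftR (smul scale A f) = (smul scale (liftR A) (liftR f) :: ('a::finite + 'b, 'm) fseries)"
proof
  interpret module scale by fact
  fix e :: "'a + 'b \<Rightarrow> nat"
  have "smul scale (liftR A) (liftR f :: ('a + 'b, 'm) fseries) e
      = smul scale A (\<lambda>u. liftR f (case_sum (e \<circ> Inl) u)) (e \<circ> Inr)"
    by (rule smul_liftR) simp
  also have "\<dots> = liftR (smul scale A f) e"
  proof (cases "e \<circ> Inl = (\<lambda>_. 0)")
    case True
    have "(\<lambda>u. liftR f (case_sum (e \<circ> Inl) u :: 'a + 'b \<Rightarrow> nat)) = f"
      using True by (simp add: liftR_def case_sum_o_inj fun_eq_iff)
    thus ?thesis using True by (simp add: liftR_def)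
  next
    case False
    have "(\<lambda>u. liftR f (case_sum (e \<circ> Inl) u :: 'a + 'b \<Rightarrow> nat)) = 0"
      using False by (simp add: liftR_def case_sum_o_inj zero_fun_def)
    thus ?thesis using False by (simp add: liftR_def smul_zero[OF mod])
  qed
  finally show "liftR (smul scale A f) e = smul scale (liftR A) (liftR f :: ('a + 'b, 'm) fseries) e" ..
qed

lemma liftL_rmul:
  fixes A B :: "('a::finite, 'r::comm_ring_1) fseries"
  shows "liftL (rmul A B) = (rmul (liftL A) (liftL B) :: ('a + 'b::finite, 'r) fseries)"
  unfolding rmul_smul by (rule liftL_smul[OF module_mult])

lemma liftR_rmul:
  fixes A B :: "('b::finite, 'r::comm_ring_1) fseries"
  shows "liftR (rmul A B) = (rmul (liftR A) (liftR B) :: ('a::finite + 'b, 'r) fseries)"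
  unfolding rmul_smul by (rule liftR_smul[OF module_mult])

lemma zero_sum_fun: "(e = (\<lambda>_. 0::nat)) \<longleftrightarrow> e \<circ> Inl = (\<lambda>_. 0) \<and> e \<circ> Inr = (\<lambda>_. 0)"
  apply (auto simp: fun_eq_iff)
  subgoal for x by (cases x) auto
  done

lemma liftL_one: "liftL one_series = (one_series :: ('a + 'b, 'r::{zero,one}) fseries)"
proof
  fix e :: "'a + 'b \<Rightarrow> nat"
  show "liftL one_series e = (one_series e :: 'r)"
    unfolding liftL_def one_series_def zero_sum_fun[of e] by simp
qed

lemma liftR_one: "liftR one_series = (one_series :: ('a + 'b, 'r::{zero,one}) fseries)"
proof
  fix e :: "'a + 'b \<Rightarrow> nat"
  show "liftR one_series e = (one_series e :: 'r)"
    unfolding liftR_def one_series_def zero_sum_fun[of e] by simp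
qed

lemma liftL_geom:
  assumes m: "m < 0" and v: "v \<noteq> (\<lambda>_. 0)"
  shows "liftL (geom L Linv m v) = (geom L Linv m (case_sum v (\<lambda>_. 0)) :: ('a + 'b, _) fseries)"
proof
  fix e :: "'a + 'b \<Rightarrow> nat"
  let ?v = "case_sum v (\<lambda>_::'b. 0::nat)"
  have v': "?v \<noteq> (\<lambda>_. 0)"
  proof
    assume h: "?v = (\<lambda>_. 0)"
    have "v i = 0" for i using fun_cong[OF h, of "Inl i"] by simp
    thus False using v by auto
  qed
  show "liftL (geom L Linv m v) e = geom L Linv m ?v e"
  proof (cases "\<exists>k. e = (\<lambda>i. k * ?v i)")
    case True
    then obtain k where k: "e = (\<lambda>i. k * ?v i)" by auto
    have e1: "e \<circ> Inr = (\<lambda>_. 0)" "e \<circ> Inl = (\<lambda>i. k * v i)" using k by (auto simp: fun_eq_iff)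
    have "liftL (geom L Linv m v) e = geom L Linv m v (\<lambda>i. k * v i)" using e1 by (simp add: liftL_def)
    also have "\<dots> = Linv ^ (nat (- m) * k)" by (rule geom_mult[OF m v])
    also have "\<dots> = geom L Linv m ?v e" unfolding k by (rule geom_mult[OF m v', symmetric])
    finally show ?thesis .
  next
    case False
    have "\<not> (\<exists>k. e \<circ> Inl = (\<lambda>i. k * v i))" if "e \<circ> Inr = (\<lambda>_. 0)"
    proof
      assume "\<exists>k. e \<circ> Inl = (\<lambda>i. k * v i)"
      then obtain k where k: "e \<circ> Inl = (\<lambda>i. k * v i)" by auto
      have "e = (\<lambda>i. k * ?v i)"
      proof
        fix j show "e j = k * ?v j"
        proof (cases j)
          case (Inl a) thus ?thesis using fun_cong[OF k, of a] by simp
        next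
          case (Inr b) thus ?thesis using fun_cong[OF that, of b] by simp
        qed
      qed
      thus False using False by blast
    qed
    thus ?thesis using False by (simp add: liftL_def geom_not_mult)
  qed
qed

lemma liftR_geom:
  assumes m: "m < 0" and v: "v \<noteq> (\<lambda>_. 0)"
  shows "liftR (geom L Linv m v) = (geom L Linv m (case_sum (\<lambda>_. 0) v) :: ('a + 'b, _) fseries)"
proof
  fix e :: "'a + 'b \<Rightarrow> nat"
  let ?v = "case_sum (\<lambda>_::'a. 0::nat) v"
  have v': "?v \<noteq> (\<lambda>_. 0)"
  proof
    assume h: "?v = (\<lambda>_. 0)"
    have "v i = 0" for i using fun_cong[OF h, of "Inr i"] by simp
    thus False using v by auto
  qed
  show "liftR (geom L Linv m v) e = geom L Linv m ?v e"
  proof (cases "\<exists>k. e = (\<lambda>i. k * ?v i)")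
    case True
    then obtain k where k: "e = (\<lambda>i. k * ?v i)" by auto
    have e1: "e \<circ> Inl = (\<lambda>_. 0)" "e \<circ> Inr = (\<lambda>i. k * v i)" using k by (auto simp: fun_eq_iff)
    have "liftR (geom L Linv m v) e = geom L Linv m v (\<lambda>i. k * v i)" using e1 by (simp add: liftR_def)
    also have "\<dots> = Linv ^ (nat (- m) * k)" by (rule geom_mult[OF m v])
    also have "\<dots> = geom L Linv m ?v e" unfolding k by (rule geom_mult[OF m v', symmetric])
    finally show ?thesis .
  next
    case False
    have "\<not> (\<exists>k. e \<circ> Inr = (\<lambda>i. k * v i))" if "e \<circ> Inl = (\<lambda>_. 0)"
    proof
      assume "\<exists>k. e \<circ> Inr = (\<lambda>i. k * v i)"
      then obtain k where k: "e \<circ> Inr = (\<lambda>i. k * v i)" by auto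
      have "e = (\<lambda>i. k * ?v i)"
      proof
        fix j show "e j = k * ?v j"
        proof (cases j)
          case (Inr a) thus ?thesis using fun_cong[OF k, of a] by simp
        next
          case (Inl b) thus ?thesis using fun_cong[OF that, of b] by simp
        qed
      qed
      thus False using False by blast
    qed
    thus ?thesis using False by (simp add: liftR_def geom_not_mult)
  qed
qed

definition mapL :: "(int \<times> ('a \<Rightarrow> nat)) list \<Rightarrow> (int \<times> ('a + 'b \<Rightarrow> nat)) list" where
  "mapL ps = map (\<lambda>(m, v). (m, case_sum v (\<lambda>_. 0))) ps"

definition mapR :: "(int \<times> ('b \<Rightarrow> nat)) list \<Rightarrow> (int \<times> ('a + 'b \<Rightarrow> nat)) list" where
  "mapR ps = map (\<lambda>(m, v). (m, case_sum (\<lambda>_. 0) v)) ps"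

lemma case_sum_nzL: "v \<noteq> (\<lambda>_. 0) \<Longrightarrow> case_sum v (\<lambda>_. 0::nat) \<noteq> (\<lambda>_. 0)"
proof
  assume v: "v \<noteq> (\<lambda>_. 0)" and h: "case_sum v (\<lambda>_. 0::nat) = (\<lambda>_. 0)"
  have "v i = 0" for i using fun_cong[OF h, of "Inl i"] by simp
  thus False using v by auto
qed

lemma case_sum_nzR: "v \<noteq> (\<lambda>_. 0) \<Longrightarrow> case_sum (\<lambda>_. 0::nat) v \<noteq> (\<lambda>_. 0)"
proof
  assume v: "v \<noteq> (\<lambda>_. 0)" and h: "case_sum (\<lambda>_. 0::nat) v = (\<lambda>_. 0)"
  have "v i = 0" for i using fun_cong[OF h, of "Inr i"] by simp
  thus False using v by auto
qed

lemma good_mapL: "good ps \<Longrightarrow> good (mapL ps)"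
  by (auto simp: good_def mapL_def case_sum_nzL)

lemma good_mapR: "good ps \<Longrightarrow> good (mapR ps)"
  by (auto simp: good_def mapR_def case_sum_nzR)

lemma liftL_Dl:
  fixes ps :: "(int \<times> ('a::finite \<Rightarrow> nat)) list" and L Linv :: "'r::comm_ring_1"
  assumes "good ps"
  shows "liftL (Dl L Linv ps) = (Dl L Linv (mapL ps) :: ('a + 'b::finite, 'r) fseries)"
  using assms
proof (induct ps)
  case Nil thus ?case by (simp add: Dl_Nil mapL_def liftL_one)
next
  case (Cons x ps)
  obtain m v where x: "x = (m,v)" by (cases x)
  have g: "m < 0" "v \<noteq> (\<lambda>_. 0)" "good ps" using Cons.prems x by (auto simp: good_Cons)
  have "liftL (Dl L Linv (x # ps)) = (rmul (liftL (geom L Linv m v)) (liftL (Dl L Linv ps))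
          :: ('a + 'b, 'r) fseries)"
    by (simp add: x Dl_Cons liftL_rmul)
  also have "\<dots> = Dl L Linv (mapL (x # ps))"
    using Cons.hyps[OF g(3)] by (simp add: x mapL_def Dl_Cons liftL_geom[OF g(1,2)])
  finally show ?case .
qed

lemma liftR_Dl:
  fixes ps :: "(int \<times> ('b::finite \<Rightarrow> nat)) list" and L Linv :: "'r::comm_ring_1"
  assumes "good ps"
  shows "liftR (Dl L Linv ps) = (Dl L Linv (mapR ps) :: ('a::finite + 'b, 'r) fseries)"
  using assms
proof (induct ps)
  case Nil thus ?case by (simp add: Dl_Nil mapR_def liftR_one)
next
  case (Cons x ps)
  obtain m v where x: "x = (m,v)" by (cases x)
  have g: "m < 0" "v \<noteq> (\<lambda>_. 0)" "good ps" using Cons.prems x by (auto simp: good_Cons)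
  have "liftR (Dl L Linv (x # ps)) = (rmul (liftR (geom L Linv m v)) (liftR (Dl L Linv ps))
          :: ('a + 'b, 'r) fseries)"
    by (simp add: x Dl_Cons liftR_rmul)
  also have "\<dots> = Dl L Linv (mapR (x # ps))"
    using Cons.hyps[OF g(3)] by (simp add: x mapR_def Dl_Cons liftR_geom[OF g(1,2)])
  finally show ?case .
qed

lemma poly_liftL:
  assumes "is_poly f"
  shows "is_poly (liftL f :: ('a + 'b, 'x::zero) fseries)"
proof -
  have sub: "{e. (liftL f :: ('a + 'b, 'x) fseries) e \<noteq> 0}
        \<subseteq> (\<lambda>t. case_sum t (\<lambda>_. 0)) ` {t. f t \<noteq> 0}"
  proof
    fix e :: "'a + 'b \<Rightarrow> nat" assume "e \<in> {e. liftL f e \<noteq> 0}"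
    hence h: "e \<circ> Inr = (\<lambda>_. 0)" "f (e \<circ> Inl) \<noteq> 0" by (auto simp: liftL_def split: if_splits)
    have "e = case_sum (e \<circ> Inl) (\<lambda>_. 0)" using case_sum_eta[of e] h(1) by simp
    thus "e \<in> (\<lambda>t. case_sum t (\<lambda>_. 0)) ` {t. f t \<noteq> 0}" using h(2) by blast
  qed
  show ?thesis unfolding is_poly_def by (rule finite_surj[OF assms[unfolded is_poly_def] sub])
qed

lemma poly_liftR:
  assumes "is_poly f"
  shows "is_poly (liftR f :: ('a + 'b, 'x::zero) fseries)"
proof -
  have sub: "{e. (liftR f :: ('a + 'b, 'x) fseries) e \<noteq> 0}
        \<subseteq> (\<lambda>t. case_sum (\<lambda>_. 0) t) ` {t. f t \<noteq> 0}"
  proof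
    fix e :: "'a + 'b \<Rightarrow> nat" assume "e \<in> {e. liftR f e \<noteq> 0}"
    hence h: "e \<circ> Inl = (\<lambda>_. 0)" "f (e \<circ> Inr) \<noteq> 0" by (auto simp: liftR_def split: if_splits)
    have "e = case_sum (\<lambda>_. 0) (e \<circ> Inr)" using case_sum_eta[of e] h(1) by simp
    thus "e \<in> (\<lambda>t. case_sum (\<lambda>_. 0) t) ` {t. f t \<noteq> 0}" using h(2) by blast
  qed
  show ?thesis unfolding is_poly_def by (rule finite_surj[OF assms[unfolded is_poly_def] sub])
qed

lemma IS_liftL:
  fixes F :: "('a::finite, 'm::ab_group_add) fseries" and L Linv :: "'r::comm_ring_1"
  assumes mod: "module scale" and F: "F \<in> int_series scale L Linv UNIV"
  shows "(liftL F :: ('a + 'b::finite, 'm) fseries) \<in> int_series scale L Linv UNIV"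
proof -
  obtain ps f where ps: "good ps" "is_poly f" "F = smul scale (Dl L Linv ps) f"
    using F unfolding IS_iff by auto
  have "(liftL F :: ('a + 'b, 'm) fseries) = smul scale (Dl L Linv (mapL ps)) (liftL f)"
    by (simp add: ps(3) liftL_smul[OF mod] liftL_Dl[OF ps(1)])
  thus ?thesis unfolding IS_iff using good_mapL[OF ps(1)] poly_liftL[OF ps(2)] by blast
qed

definition Ufin :: "('a + 'b, 'x::zero) fseries \<Rightarrow> bool" where
  "Ufin A \<longleftrightarrow> (\<forall>u. finite {e. A e \<noteq> 0 \<and> e \<circ> Inr = u})"

lemma Ufin_le:
  fixes A :: "('a + 'b::finite, 'x::zero) fseries"
  assumes "Ufin A"
  shows "finite {e. A e \<noteq> 0 \<and> e \<circ> Inr \<le> u}"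
proof -
  have "{e. A e \<noteq> 0 \<and> e \<circ> Inr \<le> u} = (\<Union>w\<in>{w. w \<le> u}. {e. A e \<noteq> 0 \<and> e \<circ> Inr = w})"
    by auto
  moreover have "finite (\<Union>w\<in>{w. w \<le> u}. {e. A e \<noteq> 0 \<and> e \<circ> Inr = w})"
    using assms finite_le_fun[of u] unfolding Ufin_def by (intro finite_UN_I) auto
  ultimately show ?thesis by simp
qed

lemma Ufin_smul:
  fixes A :: "('a::finite + 'b::finite, 'r::comm_ring_1) fseries"
    and F :: "('a + 'b, 'm::comm_monoid_add) fseries"
  assumes z1: "\<And>x. scale 0 x = 0" and z2: "\<And>r. scale r 0 = 0"
    and uA: "Ufin A" and uF: "Ufin F"
  shows "Ufin (smul scale A F)"
  unfolding Ufin_def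
proof
  fix u :: "'b \<Rightarrow> nat"
  let ?SA = "{e. A e \<noteq> 0 \<and> e \<circ> Inr \<le> u}" and ?SF = "{e. F e \<noteq> 0 \<and> e \<circ> Inr \<le> u}"
  have sub: "{e. smul scale A F e \<noteq> 0 \<and> e \<circ> Inr = u} \<subseteq> (\<lambda>p. fst p + snd p) ` (?SA \<times> ?SF)"
  proof
    fix c assume c: "c \<in> {e. smul scale A F e \<noteq> 0 \<and> e \<circ> Inr = u}"
    hence ne: "(\<Sum>p\<in>AD c. scale (A (fst p)) (F (snd p))) \<noteq> 0" by (simp add: smul_def)
    obtain p where p: "p \<in> AD c" and nz: "scale (A (fst p)) (F (snd p)) \<noteq> 0"
      using sum.not_neutral_contains_not_neutral[OF ne] by blast
    obtain a b where pab: "p = (a,b)" and hab: "\<And>i. a i + b i = c i" using p by auto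
    have cu: "c \<circ> Inr = u" using c by simp
    have "A a \<noteq> 0" using nz z1 pab by auto
    moreover have "F b \<noteq> 0" using nz z2 pab by auto
    moreover have "a \<circ> Inr \<le> u" "b \<circ> Inr \<le> u"
      unfolding le_fun_def using hab cu by (auto simp: fun_eq_iff) (metis le_add1, metis le_add2)
    moreover have "c = a + b" using hab by (simp add: fun_eq_iff)
    ultimately show "c \<in> (\<lambda>p. fst p + snd p) ` (?SA \<times> ?SF)"
      by (intro image_eqI[where x="(a,b)"]) auto
  qed
  have "finite ((\<lambda>p. fst p + snd p) ` (?SA \<times> ?SF))"
    using Ufin_le[OF uA] Ufin_le[OF uF] by (intro finite_imageI finite_cartesian_product)
  thus "finite {e. smul scale A F e \<noteq> 0 \<and> e \<circ> Inr = u}" using sub by (rule finite_subset[rotated])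
qed

lemma Ufin_poly: "is_poly f \<Longrightarrow> Ufin f"
  unfolding Ufin_def is_poly_def by (auto intro: finite_subset[rotated])

lemma Ufin_geom:
  assumes vr: "v \<circ> Inr \<noteq> (\<lambda>_. 0)"
  shows "Ufin (geom L Linv m v :: ('a + 'b, _) fseries)"
  unfolding Ufin_def
proof
  fix u
  obtain i where vi: "v (Inr i) \<noteq> 0" using vr by (auto simp: fun_eq_iff)
  have "{e. geom L Linv m v e \<noteq> 0 \<and> e \<circ> Inr = u} \<subseteq> (\<lambda>k. (\<lambda>j. k * v j)) ` {..u i}"
  proof
    fix e assume e: "e \<in> {e. geom L Linv m v e \<noteq> 0 \<and> e \<circ> Inr = u}"
    hence "\<exists>k. e = (\<lambda>j. k * v j)" by (auto simp: geom_def split: if_splits)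
    then obtain k where k: "e = (\<lambda>j. k * v j)" by auto
    have "u i = k * v (Inr i)" using e k by auto
    hence "k \<le> u i" using vi by simp
    thus "e \<in> (\<lambda>k. (\<lambda>j. k * v j)) ` {..u i}" using k by auto
  qed
  thus "finite {e. geom L Linv m v e \<noteq> 0 \<and> e \<circ> Inr = u}"
    by (rule finite_subset) simp
qed

lemma Ufin_Dl:
  fixes L Linv :: "'r::comm_ring_1"
  assumes "\<forall>(m, v)\<in>set ps. v \<circ> Inr \<noteq> (\<lambda>_. 0)"
  shows "Ufin (Dl L Linv ps :: ('a::finite + 'b::finite, 'r) fseries)"
  using assms
proof (induct ps)
  case Nil thus ?case by (simp add: Dl_Nil Ufin_poly poly_one)
next
  case (Cons x ps)
  obtain m v where x: "x = (m,v)" by (cases x)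
  have vr: "v \<circ> Inr \<noteq> (\<lambda>_. 0)" using Cons.prems unfolding x by (simp add: comp_def)
  have IH: "Ufin (Dl L Linv ps :: ('a + 'b, 'r) fseries)" using Cons by simp
  show ?case unfolding x Dl_Cons rmul_smul
    by (rule Ufin_smul[OF _ _ Ufin_geom[OF vr] IH[unfolded rmul_smul]]) simp_all
qed

lemma unflatten_poly:
  assumes "Ufin H"
  shows "is_poly (unflatten H u)"
proof -
  have "{t. unflatten H u t \<noteq> 0} \<subseteq> (\<lambda>e. e \<circ> Inl) ` {e. H e \<noteq> 0 \<and> e \<circ> Inr = u}"
  proof
    fix t assume "t \<in> {t. unflatten H u t \<noteq> 0}"
    hence "H (case_sum t u) \<noteq> 0" by (simp add: unflatten_def)
    thus "t \<in> (\<lambda>e. e \<circ> Inl) ` {e. H e \<noteq> 0 \<and> e \<circ> Inr = u}"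
      by (intro image_eqI[where x="case_sum t u"]) (simp_all add: case_sum_o_inj)
  qed
  thus ?thesis using assms unfolding is_poly_def Ufin_def
    by (meson finite_imageI finite_subset)
qed

lemma Dl_filter:
  fixes ps :: "(int \<times> ('v::finite \<Rightarrow> nat)) list"
  shows "Dl L Linv ps = rmul (Dl L Linv (filter P ps)) (Dl L Linv (filter (\<lambda>x. \<not> P x) ps))"
proof (induct ps)
  case Nil thus ?case by (simp add: Dl_Nil rmul_one)
next
  case (Cons x ps)
  obtain m v where x: "x = (m,v)" by (cases x)
  show ?case
  proof (cases "P x")
    case True thus ?thesis using Cons by (simp add: x Dl_Cons rmul_assoc)
  next
    case False thus ?thesis using Cons by (simp add: x Dl_Cons rmul_left_comm)
  qed
qed

lemma part2:
  fixes F :: "('a::finite + 'b::finite, 'm::ab_group_add) fseries" and L Linv :: "'r::comm_ring_1"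
  assumes mod: "module scale" and F: "F \<in> int_series scale L Linv UNIV"
  shows "unflatten F u \<in> int_series scale L Linv UNIV"
proof -
  obtain ps f where ps: "good ps" "is_poly f" "F = smul scale (Dl L Linv ps) f"
    using F unfolding IS_iff by auto
  define P where "P = (\<lambda>x::int \<times> ('a + 'b \<Rightarrow> nat). snd x \<circ> Inr = (\<lambda>_. 0))"
  define ps1 where "ps1 = filter P ps"
  define ps2 where "ps2 = filter (\<lambda>x. \<not> P x) ps"
  define ps1' where "ps1' = map (\<lambda>(m, v). (m, v \<circ> Inl)) ps1"
  have map_eq: "(mapL ps1' :: (int \<times> ('a + 'b \<Rightarrow> nat)) list) = ps1"
    unfolding mapL_def ps1'_def map_map
  proof (rule map_idI)
    fix x assume "x \<in> set ps1"
    hence Px: "P x" by (simp add: ps1_def)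
    obtain m v where x: "x = (m, v)" by (cases x)
    have vr: "v \<circ> Inr = (\<lambda>_. 0)" using Px x by (simp add: P_def)
    have "case_sum (v \<circ> Inl) (\<lambda>_. 0::nat) = v" using case_sum_eta[of v] vr by simp
    thus "((\<lambda>(m, v). (m, case_sum v (\<lambda>_. 0))) \<circ> (\<lambda>(m, v). (m, v \<circ> Inl))) x = x"
      by (simp add: x)
  qed
  have good1: "good ps1'"
    unfolding good_def
  proof
    fix y assume "y \<in> set ps1'"
    then obtain x where x: "x \<in> set ps1" and y: "y = (\<lambda>(m, v). (m, v \<circ> Inl)) x"
      by (auto simp: ps1'_def)
    obtain m v where xv: "x = (m, v)" by (cases x)
    have "x \<in> set ps" "P x" using x by (auto simp: ps1_def)
    hence m: "m < 0" and v: "v \<noteq> (\<lambda>_. 0)" and vr: "v \<circ> Inr = (\<lambda>_. 0)"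
      using ps(1) xv by (auto simp: good_def P_def)
    have "v \<circ> Inl \<noteq> (\<lambda>_. 0)" using v vr zero_sum_fun[of v] by blast
    thus "case y of (m, v) \<Rightarrow> m < 0 \<and> v \<noteq> (\<lambda>_. 0)" using m y xv by simp
  qed
  have ur: "\<forall>(m, v)\<in>set ps2. v \<circ> Inr \<noteq> (\<lambda>_. 0)" by (auto simp: ps2_def P_def)
  have D1: "Dl L Linv ps1 = liftL (Dl L Linv ps1')"
    using liftL_Dl[OF good1, where 'b='b and L=L and Linv=Linv] map_eq by simp
  define H where "H = smul scale (Dl L Linv ps2) f"
  have FH: "F = smul scale (liftL (Dl L Linv ps1')) H"
  proof -
    have "F = smul scale (rmul (Dl L Linv ps1) (Dl L Linv ps2)) f"
      using ps(3) Dl_filter[where L=L and Linv=Linv and ps=ps and P=P] by (simp add: ps1_def ps2_def)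
    also have "\<dots> = smul scale (Dl L Linv ps1) H" by (simp add: smul_assoc[OF mod] H_def)
    finally show ?thesis using D1 by simp
  qed
  have UH: "Ufin H" unfolding H_def rmul_smul
    by (rule Ufin_smul[OF _ _ Ufin_Dl[OF ur] Ufin_poly[OF ps(2)]])
       (simp_all add: module.scale_zero_left[OF mod] module.scale_zero_right[OF mod])
  have "unflatten F u = smul scale (Dl L Linv ps1') (unflatten H u)"
  proof
    fix t
    have "unflatten F u t = smul scale (liftL (Dl L Linv ps1')) H (case_sum t u)"
      by (simp add: unflatten_def FH)
    also have "\<dots> = smul scale (Dl L Linv ps1') (\<lambda>t'. H (case_sum t' (case_sum t u \<circ> Inr)))
                       (case_sum t u \<circ> Inl)"
      by (rule smul_liftL) (simp add: module.scale_zero_left[OF mod])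
    also have "\<dots> = smul scale (Dl L Linv ps1') (unflatten H u) t"
    proof -
      have "unflatten H u = (\<lambda>t'. H (case_sum t' u))" by (rule ext) (simp add: unflatten_def)
      thus ?thesis by (simp add: case_sum_o_inj)
    qed
    finally show "unflatten F u t = smul scale (Dl L Linv ps1') (unflatten H u) t" .
  qed
  thus ?thesis unfolding IS_iff using good1 unflatten_poly[OF UH] by blast
qed

lemma flatten_smul:
  fixes A :: "('b::finite, 'r::comm_ring_1) fseries"
    and g :: "('b, ('a::finite, 'm::ab_group_add) fseries) fseries"
  assumes mod: "module scale"
  shows "flatten (smul (series_scale scale) A g) = smul scale (liftR A) (flatten g)"
proof
  interpret module scale by fact
  fix e :: "'a + 'b \<Rightarrow> nat"
  have "flatten (smul (series_scale scale) A g) e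
      = (\<Sum>p\<in>AD (e \<circ> Inr). scale (A (fst p)) (g (snd p) (e \<circ> Inl)))"
    by (simp add: flatten_def smul_def sum_apply_fun series_scale_def)
  also have "\<dots> = smul scale A (\<lambda>u. flatten g (case_sum (e \<circ> Inl) u)) (e \<circ> Inr)"
    by (simp add: smul_def flatten_def case_sum_o_inj)
  also have "\<dots> = smul scale (liftR A) (flatten g) e" by (rule smul_liftR[symmetric]) simp
  finally show "flatten (smul (series_scale scale) A g) e = smul scale (liftR A) (flatten g) e" .
qed

lemma le_minus_zero: "((u :: 'x \<Rightarrow> nat) \<le> r \<and> r - u = (\<lambda>_. 0)) \<longleftrightarrow> u = r"
  by (auto simp: le_fun_def fun_eq_iff intro: le_antisym)

lemma flatten_decomp:
  fixes g :: "('b::finite, ('a::finite, 'm::ab_group_add) fseries) fseries"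
    and scale :: "'r::comm_ring_1 \<Rightarrow> 'm \<Rightarrow> 'm"
  assumes mod: "module scale" and pg: "is_poly g"
  shows "flatten g = (\<Sum>u\<in>{u. g u \<noteq> 0}. smul scale (liftR (mono_s u :: ('b, 'r) fseries)) (liftL (g u)))"
proof
  interpret module scale by fact
  fix e :: "'a + 'b \<Rightarrow> nat"
  let ?S = "{u. g u \<noteq> 0}"
  have fin: "finite ?S" using pg by (simp add: is_poly_def)
  have trm: "smul scale (liftR (mono_s u :: ('b, 'r) fseries)) (liftL (g u)) e
            = (if u = e \<circ> Inr then g u (e \<circ> Inl) else 0)" for u
  proof -
    have "smul scale (liftR (mono_s u :: ('b, 'r) fseries)) (liftL (g u)) e
        = smul scale (mono_s u) (\<lambda>w. liftL (g u) (case_sum (e \<circ> Inl) w)) (e \<circ> Inr)"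
      by (rule smul_liftR) simp
    also have "\<dots> = (if u \<le> e \<circ> Inr then liftL (g u) (case_sum (e \<circ> Inl) ((e \<circ> Inr) - u)) else 0)"
      by (rule smul_mono[OF mod])
    also have "\<dots> = (if u = e \<circ> Inr then g u (e \<circ> Inl) else 0)"
      using le_minus_zero[of u "e \<circ> Inr"] by (auto simp: liftL_def case_sum_o_inj)
    finally show ?thesis .
  qed
  have "(\<Sum>u\<in>?S. smul scale (liftR (mono_s u :: ('b, 'r) fseries)) (liftL (g u))) e
      = (\<Sum>u\<in>?S. smul scale (liftR (mono_s u :: ('b, 'r) fseries)) (liftL (g u)) e)"
    by (rule sum_apply_fun)
  also have "\<dots> = (\<Sum>u\<in>?S. if u = e \<circ> Inr then g u (e \<circ> Inl) else 0)"
    using trm by simp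
  also have "\<dots> = g (e \<circ> Inr) (e \<circ> Inl)"
    by (auto simp: sum.delta[OF fin])
  finally show "flatten g e = (\<Sum>u\<in>?S. smul scale (liftR (mono_s u :: ('b, 'r) fseries)) (liftL (g u))) e"
    by (simp add: flatten_def)
qed

lemma part1:
  fixes G :: "('b::finite, ('a::finite, 'm::ab_group_add) fseries) fseries"
    and L Linv :: "'r::comm_ring_1"
  assumes mod: "module scale"
    and G: "G \<in> int_series (series_scale scale) L Linv (int_series scale L Linv UNIV)"
  shows "flatten G \<in> int_series scale L Linv UNIV"
proof -
  obtain qs g where qs: "good qs" "is_poly g" "\<forall>n. g n \<in> int_series scale L Linv UNIV"
      "G = smul (series_scale scale) (Dl L Linv qs) g"
    using G unfolding int_series_def good_def Dl_def by auto
  have "flatten G = smul scale (Dl L Linv (mapR qs)) (flatten g)"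
    by (simp add: qs(4) flatten_smul[OF mod] liftR_Dl[OF qs(1)])
  moreover have "flatten g \<in> int_series scale L Linv UNIV"
    unfolding flatten_decomp[OF mod qs(2)]
    by (intro IS_sum[OF mod] IS_poly_mul[OF mod] poly_liftR poly_mono IS_liftL[OF mod] qs(3)[rule_format])
  ultimately show ?thesis using IS_Dl_mul[OF mod good_mapR[OF qs(1)]] by simp
qed

theorem lemma5p2:
  fixes scale :: "'r::comm_ring_1 \<Rightarrow> 'm::ab_group_add \<Rightarrow> 'm"
    and L Linv :: 'r
  assumes "module scale"
    and "L * Linv = 1"
    and "\<And>n::nat. n \<ge> 1 \<Longrightarrow> \<exists>u. (1 - L ^ n) * u = 1"
  shows "(\<forall>G :: ('b::finite, ('a::finite, 'm) fseries) fseries.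
            G \<in> int_series (series_scale scale) L Linv (int_series scale L Linv UNIV)
            \<longrightarrow> flatten G \<in> int_series scale L Linv UNIV)
       \<and> (\<forall>F :: ('a + 'b, 'm) fseries. F \<in> int_series scale L Linv UNIV
            \<longrightarrow> (\<forall>u. unflatten F u \<in> int_series scale L Linv UNIV))"
  using part1[OF assms(1)] part2[OF assms(1)] by blast

end
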